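(* Let $\sigma\colon S\curvearrowright A$ be an algebraic action satisfying the standing assumptions, with globalization $\tilde\sigma\colon\mathscr S\curvearrowright\mathscr A$ such that $\mathscr A$ is generated by $\bigcup_{g\in\mathscr S}\tilde\sigma_g(A)$. Let $\mathbb I=\{[A:C]:C\in\mathcal C\}$ and let $\mathbb Z[\mathbb I^{-1}]$ be the subring of $\mathbb Q$ generated by $\mathbb Z$ and $\{1/n:n\in\mathbb I\}$. Then the canonical map $\mathbb Z[\mathbb I^{-1}]\otimes A\to\mathbb Z[\mathbb I^{-1}]\otimes\mathscr A$, $1\otimes x\mapsto1\otimes x$, is an isomorphism.
   Context: Algebraic action $\sigma\colon S\curvearrowright A$: left cancellative monoid $S$, abelian group $A$, monoid homomorphism $s\mapsto\sigma_s$ into injective endomorphisms of $A$. Constructible subgroups $\mathcal C$: smallest family of subgroups of $A$ containing $A$ and closed under $C\mapsto\sigma_s(C)$ and $C\mapsto\sigma_s^{-1}C=\{a\in A:\sigma_s(a)\in C\}$. Standing assumptions: $\sigma$ faithful, non-automorphic unless $S$ is a group, satisfies (FI): $[A:\sigma_s(A)]<\infty$ for all $s\in S$ (so all $C\in\mathcal C$ have finite index), and has a globalization: a group $\mathscr S\supseteq S$ generated by $S$, an abelian group $\mathscr A\supseteq A$, and an action $\tilde\sigma$ of $\mathscr S$ on $\mathscr A$ by automorphisms with $\tilde\sigma_s|_A=\sigma_s$ for $s\in S$, satisfying (JF): if $C\in\mathcal C$, $g\in\mathscr S$ and $\tilde\sigma_g$ fixes $C$ pointwise, then $g=1$. *)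

theory Defs
  imports Complex_Main "HOL-Algebra.Generated_Groups"
begin

definition is_subgrp :: "'a::ab_group_add set \<Rightarrow> bool" where
  "is_subgrp H \<longleftrightarrow> 0 \<in> H \<and> (\<forall>x\<in>H. \<forall>y\<in>H. x - y \<in> H)"

definition gen_subgrp :: "'a::ab_group_add set \<Rightarrow> 'a set" where
  "gen_subgrp X = \<Inter>{H. is_subgrp H \<and> X \<subseteq> H}"

definition cosets_in :: "'a::ab_group_add set \<Rightarrow> 'a set \<Rightarrow> 'a set set" where
  "cosets_in A C = (\<lambda>a. (\<lambda>c. a + c) ` C) ` A"

definition index_in :: "'a::ab_group_add set \<Rightarrow> 'a set \<Rightarrow> nat" where
  "index_in A C = card (cosets_in A C)"

inductive_set constructible ::
  "'s set \<Rightarrow> ('s \<Rightarrow> 'a \<Rightarrow> 'a) \<Rightarrow> 'a set \<Rightarrow> 'a set set"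
  for S :: "'s set" and \<sigma> :: "'s \<Rightarrow> 'a \<Rightarrow> 'a" and A :: "'a set" where
  top: "A \<in> constructible S \<sigma> A"
| img: "C \<in> constructible S \<sigma> A \<Longrightarrow> s \<in> S \<Longrightarrow> \<sigma> s ` C \<in> constructible S \<sigma> A"
| preimg: "C \<in> constructible S \<sigma> A \<Longrightarrow> s \<in> S \<Longrightarrow> {a \<in> A. \<sigma> s a \<in> C} \<in> constructible S \<sigma> A"

definition is_subring_rat :: "rat set \<Rightarrow> bool" where
  "is_subring_rat T \<longleftrightarrow> 1 \<in> T \<and> (\<forall>x\<in>T. \<forall>y\<in>T. x - y \<in> T \<and> x * y \<in> T)"

definition Z_inv :: "nat set \<Rightarrow> rat set" where
  "Z_inv I = \<Inter>{T. is_subring_rat T \<and> range of_int \<subseteq> T \<and> (\<lambda>n. 1 / of_nat n) ` I \<subseteq> T}"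

section \<open>Tensor product R \<otimes>_Z M for R \<subseteq> Q and M a subgroup of an ab_group_add type\<close>

text \<open>Free abelian group on R \<times> M: finitely supported integer-valued functions.\<close>
definition free_ab :: "rat set \<Rightarrow> 'a set \<Rightarrow> ((rat \<times> 'a) \<Rightarrow> int) set" where
  "free_ab R M = {f. finite {x. f x \<noteq> 0} \<and> {x. f x \<noteq> 0} \<subseteq> R \<times> M}"

definition delta :: "'b \<Rightarrow> 'b \<Rightarrow> int" where
  "delta p = (\<lambda>x. if x = p then 1 else 0)"

definition tgens :: "rat set \<Rightarrow> 'a::ab_group_add set \<Rightarrow> ((rat \<times> 'a) \<Rightarrow> int) set" where
  "tgens R M =
     {(\<lambda>x. delta (r + r', m) x - delta (r, m) x - delta (r', m) x) | r r' m. r \<in> R \<and> r' \<in> R \<and> m \<in> M}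
   \<union> {(\<lambda>x. delta (r, m + m') x - delta (r, m) x - delta (r, m') x) | r m m'. r \<in> R \<and> m \<in> M \<and> m' \<in> M}"

definition is_zsub :: "('b \<Rightarrow> int) set \<Rightarrow> bool" where
  "is_zsub H \<longleftrightarrow> (\<lambda>_. 0) \<in> H \<and> (\<forall>f\<in>H. \<forall>g\<in>H. (\<lambda>x. f x - g x) \<in> H)"

definition trel :: "rat set \<Rightarrow> 'a::ab_group_add set \<Rightarrow> ((rat \<times> 'a) \<Rightarrow> int) set" where
  "trel R M = \<Inter>{H. is_zsub H \<and> tgens R M \<subseteq> H}"

text \<open>Class of a formal sum in the tensor product.\<close>
definition tcls :: "rat set \<Rightarrow> 'a::ab_group_add set \<Rightarrow> ((rat \<times> 'a) \<Rightarrow> int) \<Rightarrow> ((rat \<times> 'a) \<Rightarrow> int) set" where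
  "tcls R M f = {g \<in> free_ab R M. (\<lambda>x. g x - f x) \<in> trel R M}"

definition tensor :: "rat set \<Rightarrow> 'a::ab_group_add set \<Rightarrow> ((rat \<times> 'a) \<Rightarrow> int) set set" where
  "tensor R M = tcls R M ` free_ab R M"

text \<open>Canonical map R \<otimes> M \<rightarrow> R \<otimes> N for M \<subseteq> N, induced by r \<otimes> x \<mapsto> r \<otimes> x.\<close>
definition tensor_map :: "rat set \<Rightarrow> 'a::ab_group_add set \<Rightarrow> ((rat \<times> 'a) \<Rightarrow> int) set \<Rightarrow> ((rat \<times> 'a) \<Rightarrow> int) set" where
  "tensor_map R N X = tcls R N (SOME f. f \<in> X)"

end

theory Submission
  imports Defs
begin

fun nsm :: "nat \<Rightarrow> 'a::ab_group_add \<Rightarrow> 'a" where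
  "nsm 0 a = 0" | "nsm (Suc n) a = a + nsm n a"

definition zsm :: "int \<Rightarrow> 'a::ab_group_add \<Rightarrow> 'a" where
  "zsm k a = (if 0 \<le> k then nsm (nat k) a else - nsm (nat (-k)) a)"

lemma zsm_0[simp]: "zsm 0 a = 0" by (simp add: zsm_def)

lemma zsm_1[simp]: "zsm 1 a = a" by (simp add: zsm_def)

lemma zsm_plus1: "zsm (k+1) a = zsm k a + a"
proof (cases "0 \<le> k")
  case True
  then have "nat (k+1) = Suc (nat k)" by simp
  then show ?thesis using True by (simp add: zsm_def add.commute)
next
  case False
  show ?thesis
  proof (cases "k = -1")
    case True then show ?thesis by (simp add: zsm_def)
  next
    case F2: False
    with False have "nat (-k) = Suc (nat (-(k+1)))" by simp
    then show ?thesis using False F2 by (simp add: zsm_def)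
  qed
qed

lemma zsm_minus1: "zsm (k-1) a = zsm k a - a"
  using zsm_plus1[of "k-1" a] by simp

lemma zsm_add: "zsm (k+l) a = zsm k a + zsm l a"
proof (induction l rule: int_induct[where k=0])
  case base then show ?case by simp
next
  case (step1 i)
  have "zsm (k+(i+1)) a = zsm ((k+i)+1) a" by (simp add: add.assoc)
  then show ?case using step1 zsm_plus1[of "k+i" a] zsm_plus1[of i a]
    by (simp add: add.assoc)
next
  case (step2 i)
  have "zsm (k+(i-1)) a = zsm ((k+i)-1) a" by (simp add: algebra_simps)
  then show ?case using step2 zsm_minus1[of "k+i" a] zsm_minus1[of i a]
    by (simp add: diff_add_eq)
qed

lemma zsm_zero[simp]: "zsm k (0::'a::ab_group_add) = 0"
proof (induction k rule: int_induct[where k=0])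
  case base then show ?case by simp
next
  case (step1 i) then show ?case using zsm_plus1[of i "0::'a"] by simp
next
  case (step2 i) then show ?case using zsm_minus1[of i "0::'a"] by simp
qed

lemma zsm_distrib: "zsm k (a+b) = zsm k a + zsm k b"
proof (induction k rule: int_induct[where k=0])
  case base then show ?case by simp
next
  case (step1 i) then show ?case unfolding zsm_plus1 by (simp add: ac_simps)
next
  case (step2 i) then show ?case unfolding zsm_minus1 by (simp add: algebra_simps)
qed

lemma zsm_neg: "zsm k (-a) = - zsm k a"
  using zsm_distrib[of k a "-a"] by (simp add: eq_neg_iff_add_eq_0 add.commute)

lemma zsm_diff: "zsm k (a-b) = zsm k a - zsm k b"
  using zsm_distrib[of k a "-b"] zsm_neg[of k b] by simp

lemma zsm_uminus_k: "zsm (-k) a = - zsm k a"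
  using zsm_add[of k "-k" a] by (simp add: eq_neg_iff_add_eq_0 add.commute)

lemma zsm_diff_k: "zsm (k-l) a = zsm k a - zsm l a"
  using zsm_add[of k "-l" a] zsm_uminus_k[of l a] by simp

lemma zsm_mult: "zsm (k*l) a = zsm k (zsm l a)"
proof (induction k rule: int_induct[where k=0])
  case base then show ?case by simp
next
  case (step1 i) then show ?case using zsm_plus1[of i "zsm l a"] zsm_add[of "i*l" l a]
    by (simp add: algebra_simps)
next
  case (step2 i)
  have "(i-1)*l = i*l - l" by (simp add: algebra_simps)
  then show ?case using step2 zsm_minus1[of i "zsm l a"] zsm_diff_k[of "i*l" l a]
    by simp
qed

lemma zsm_comm: "zsm k (zsm l a) = zsm l (zsm k a)"
  by (metis zsm_mult mult.commute)

lemma zsm_hom: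
  assumes add: "\<And>x y. f (x + y) = f x + f y"
  shows "f (zsm k a) = zsm k ((f a)::'b::ab_group_add)"
proof -
  have f0: "f 0 = 0" using add[of 0 0] by simp
  have fd: "f (x - y) = f x - f y" for x y using add[of "x-y" y] by (simp add: algebra_simps)
  show ?thesis
  proof (induction k rule: int_induct[where k=0])
    case base then show ?case by (simp add: f0)
  next
    case (step1 i) then show ?case unfolding zsm_plus1 add by simp
  next
    case (step2 i) then show ?case unfolding zsm_minus1 fd by simp
  qed
qed

lemma zsm_sum: "zsm k (sum g X) = (\<Sum>x\<in>X. zsm k (g x))"
  by (induction X rule: infinite_finite_induct) (auto simp: zsm_distrib)

lemma zsm_sum_k: "zsm (sum c X) a = (\<Sum>x\<in>X. zsm (c x) a)"
  by (induction X rule: infinite_finite_induct) (auto simp: zsm_add)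

lemma sum_const_zsm: "finite Q \<Longrightarrow> (\<Sum>x\<in>Q. a) = zsm (int (card Q)) a"
proof (induction Q rule: finite_induct)
  case empty then show ?case by simp
next
  case (insert x F)
  then have "int (card (insert x F)) = int (card F) + 1" by simp
  moreover have "(\<Sum>x\<in>insert x F. a) = a + (\<Sum>x\<in>F. a)" using insert by simp
  ultimately show ?case using insert zsm_plus1[of "int (card F)" a] by (metis add.commute)
qed

lemma subgrp_0: "is_subgrp H \<Longrightarrow> 0 \<in> H" by (simp add: is_subgrp_def)
lemma subgrp_diff: "is_subgrp H \<Longrightarrow> x \<in> H \<Longrightarrow> y \<in> H \<Longrightarrow> x - y \<in> H" by (simp add: is_subgrp_def)
lemma subgrp_neg: "is_subgrp H \<Longrightarrow> x \<in> H \<Longrightarrow> - x \<in> H"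
  using subgrp_diff[of H 0 x] subgrp_0 by fastforce
lemma subgrp_add: "is_subgrp H \<Longrightarrow> x \<in> H \<Longrightarrow> y \<in> H \<Longrightarrow> x + y \<in> H"
  using subgrp_diff[of H x "-y"] subgrp_neg by fastforce
lemma subgrp_sum: "is_subgrp H \<Longrightarrow> (\<And>x. x \<in> X \<Longrightarrow> g x \<in> H) \<Longrightarrow> sum g X \<in> H"
  by (induction X rule: infinite_finite_induct) (auto simp: subgrp_0 subgrp_add)
lemma subgrp_zsm: assumes "is_subgrp H" "a \<in> H" shows "zsm k a \<in> H"
proof (induction k rule: int_induct[where k=0])
  case base then show ?case using assms by (simp add: subgrp_0)
next
  case (step1 i) then show ?case using zsm_plus1[of i] assms subgrp_add by metis
next
  case (step2 i) then show ?case using zsm_minus1[of i] assms subgrp_diff by metis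
qed

lemma subgrp_UNIV: "is_subgrp UNIV" by (simp add: is_subgrp_def)


lemma trel_zsub: "is_zsub (trel R M)"
  unfolding is_zsub_def trel_def by auto

lemma tgens_trel: "tgens R M \<subseteq> trel R M"
  unfolding trel_def by auto

lemma trel_0: "(\<lambda>_. 0) \<in> trel R M" using trel_zsub unfolding is_zsub_def by blast
lemma trel_diff: "f \<in> trel R M \<Longrightarrow> g \<in> trel R M \<Longrightarrow> (\<lambda>x. f x - g x) \<in> trel R M"
  using trel_zsub unfolding is_zsub_def by blast
lemma trel_neg: "f \<in> trel R M \<Longrightarrow> (\<lambda>x. - f x) \<in> trel R M"
  using trel_diff[OF trel_0, of f] by simp
lemma trel_add: "f \<in> trel R M \<Longrightarrow> g \<in> trel R M \<Longrightarrow> (\<lambda>x. f x + g x) \<in> trel R M"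
  using trel_diff[of f R M "\<lambda>x. - g x"] trel_neg[of g] by simp
lemma trel_smul: assumes "f \<in> trel R M" shows "(\<lambda>x. k * f x) \<in> trel R M"
proof (induction k rule: int_induct[where k=0])
  case base then show ?case using trel_0 by simp
next
  case (step1 i)
  have "(\<lambda>x. (i+1) * f x) = (\<lambda>x. i * f x + f x)" by (simp add: algebra_simps)
  then show ?case using trel_add[OF step1(2) assms] by simp
next
  case (step2 i)
  have "(\<lambda>x. (i-1) * f x) = (\<lambda>x. i * f x - f x)" by (simp add: algebra_simps)
  then show ?case using trel_diff[OF step2(2) assms] by simp
qed

definition teq where "teq R M f g \<longleftrightarrow> (\<lambda>x. f x - g x) \<in> trel R M"

lemma teq_refl: "teq R M f f" using trel_0 by (simp add: teq_def)
lemma teq_eq: "f = g \<Longrightarrow> teq R M f g" using teq_refl by simp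
lemma teq_sym: "teq R M f g \<Longrightarrow> teq R M g f"
  unfolding teq_def using trel_neg by fastforce
lemma teq_trans[trans]: "teq R M f g \<Longrightarrow> teq R M g h \<Longrightarrow> teq R M f h"
  unfolding teq_def using trel_add by fastforce
lemma teq_add: "teq R M f f' \<Longrightarrow> teq R M g g' \<Longrightarrow> teq R M (\<lambda>x. f x + g x) (\<lambda>x. f' x + g' x)"
  unfolding teq_def using trel_add[of "\<lambda>x. f x - f' x" R M "\<lambda>x. g x - g' x"] by (simp add: algebra_simps)
lemma teq_diff: "teq R M f f' \<Longrightarrow> teq R M g g' \<Longrightarrow> teq R M (\<lambda>x. f x - g x) (\<lambda>x. f' x - g' x)"
  unfolding teq_def using trel_diff[of "\<lambda>x. f x - f' x" R M "\<lambda>x. g x - g' x"] by (simp add: algebra_simps)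
lemma teq_smul: "teq R M f g \<Longrightarrow> teq R M (\<lambda>x. k * f x) (\<lambda>x. k * g x)"
  unfolding teq_def using trel_smul[of "\<lambda>x. f x - g x" R M k] by (simp add: algebra_simps)
lemma teq_zero_iff: "teq R M f (\<lambda>_. 0) \<longleftrightarrow> f \<in> trel R M"
  unfolding teq_def by simp

lemma L1: "r \<in> R \<Longrightarrow> m \<in> M \<Longrightarrow> m' \<in> M \<Longrightarrow>
  teq R M (delta (r, m + m')) (\<lambda>x. delta (r,m) x + delta (r,m') x)"
proof -
  assume "r \<in> R" "m \<in> M" "m' \<in> M"
  then have "(\<lambda>x. delta (r, m + m') x - delta (r, m) x - delta (r, m') x) \<in> tgens R M"
    unfolding tgens_def by blast
  then show ?thesis using tgens_trel unfolding teq_def by (auto simp: algebra_simps)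
qed

lemma L2: "r \<in> R \<Longrightarrow> r' \<in> R \<Longrightarrow> m \<in> M \<Longrightarrow>
  teq R M (delta (r + r', m)) (\<lambda>x. delta (r,m) x + delta (r',m) x)"
proof -
  assume "r \<in> R" "r' \<in> R" "m \<in> M"
  then have "(\<lambda>x. delta (r + r', m) x - delta (r, m) x - delta (r', m) x) \<in> tgens R M"
    unfolding tgens_def by blast
  then show ?thesis using tgens_trel unfolding teq_def by (auto simp: algebra_simps)
qed

lemma L3: assumes "r \<in> R" "is_subgrp M" shows "teq R M (delta (r, 0)) (\<lambda>_. 0)"
proof -
  have "0 \<in> M" using assms subgrp_0 by blast
  then have "(\<lambda>x. delta (r, 0) x - (delta (r,0) x + delta (r,0) x)) \<in> trel R M"
    using L1[OF assms(1), of 0 M 0] unfolding teq_def by simp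
  then have "(\<lambda>x. - delta (r, 0) x) \<in> trel R M" by simp
  then show ?thesis using trel_neg unfolding teq_def by fastforce
qed

lemma L3': assumes "0 \<in> R" "m \<in> M" shows "teq R M (delta (0, m)) (\<lambda>_. 0)"
proof -
  have "(\<lambda>x. delta (0, m) x - (delta (0,m) x + delta (0,m) x)) \<in> trel R M"
    using L2[OF assms(1) assms(1) assms(2)] unfolding teq_def by simp
  then have "(\<lambda>x. - delta (0, m) x) \<in> trel R M" by simp
  then show ?thesis using trel_neg unfolding teq_def by fastforce
qed

lemma L5: assumes "r \<in> R" "m \<in> M" "is_subgrp M"
  shows "teq R M (\<lambda>x. k * delta (r,m) x) (delta (r, zsm k m))"
proof (induction k rule: int_induct[where k=0])
  case base then show ?case using teq_sym[OF L3[OF assms(1,3)]] by simp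
next
  case (step1 i)
  have zi: "zsm i m \<in> M" using assms subgrp_zsm by blast
  have "teq R M (\<lambda>x. (i+1) * delta (r,m) x) (\<lambda>x. i * delta (r,m) x + delta (r,m) x)"
    by (rule teq_eq) (simp add: algebra_simps)
  also have "teq R M \<dots> (\<lambda>x. delta (r, zsm i m) x + delta (r,m) x)"
    using teq_add[OF step1(2) teq_refl] .
  also have "teq R M \<dots> (delta (r, zsm (i+1) m))"
    using teq_sym[OF L1[OF assms(1) zi assms(2)]] by (simp add: zsm_plus1)
  finally show ?case .
next
  case (step2 i)
  have zi: "zsm (i-1) m \<in> M" using assms subgrp_zsm by blast
  have "teq R M (\<lambda>x. (i-1) * delta (r,m) x) (\<lambda>x. i * delta (r,m) x - delta (r,m) x)"
    by (rule teq_eq) (simp add: algebra_simps)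
  also have "teq R M \<dots> (\<lambda>x. delta (r, zsm i m) x - delta (r,m) x)"
    using teq_diff[OF step2(2) teq_refl] .
  also have "teq R M \<dots> (delta (r, zsm (i - 1) m))"
  proof -
    have e: "zsm (i-1) m + m = zsm i m" by (simp add: zsm_minus1)
    have "teq R M (\<lambda>x. delta (r, zsm i m) x - delta (r,m) x) (\<lambda>x. delta (r, zsm (i-1) m) x + delta (r,m) x - delta (r,m) x)"
      using teq_diff[OF L1[OF assms(1) zi assms(2)] teq_refl[of R M "delta (r,m)"]] unfolding e .
    then show ?thesis by simp
  qed
  finally show ?case .
qed

lemma L6: assumes "r \<in> R" "m \<in> M" "\<And>k. of_int k * r \<in> R"
  shows "teq R M (\<lambda>x. k * delta (r,m) x) (delta (of_int k * r, m))"
proof (induction k rule: int_induct[where k=0])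
  case base then show ?case using teq_sym[OF L3'[OF _ assms(2)]] assms(3)[of 0] by simp
next
  case (step1 i)
  have "teq R M (\<lambda>x. (i+1) * delta (r,m) x) (\<lambda>x. i * delta (r,m) x + delta (r,m) x)"
    by (rule teq_eq) (simp add: algebra_simps)
  also have "teq R M \<dots> (\<lambda>x. delta (of_int i * r, m) x + delta (r,m) x)"
    using teq_add[OF step1(2) teq_refl] .
  also have "teq R M \<dots> (delta (of_int (i+1) * r, m))"
    using teq_sym[OF L2[OF assms(3)[of i] assms(1) assms(2)]] by (simp add: algebra_simps)
  finally show ?case .
next
  case (step2 i)
  have "teq R M (\<lambda>x. (i-1) * delta (r,m) x) (\<lambda>x. i * delta (r,m) x - delta (r,m) x)"
    by (rule teq_eq) (simp add: algebra_simps)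
  also have "teq R M \<dots> (\<lambda>x. delta (of_int i * r, m) x - delta (r,m) x)"
    using teq_diff[OF step2(2) teq_refl] .
  also have "teq R M \<dots> (delta (of_int (i - 1) * r, m))"
  proof -
    have e: "of_int (i-1) * r + r = of_int i * r" by (simp add: algebra_simps)
    have "teq R M (\<lambda>x. delta (of_int i * r, m) x - delta (r,m) x) (\<lambda>x. delta (of_int (i-1) * r, m) x + delta (r,m) x - delta (r,m) x)"
      using teq_diff[OF L2[OF assms(3)[of "i-1"] assms(1) assms(2)] teq_refl[of R M "delta (r,m)"]] unfolding e .
    then show ?thesis by simp
  qed
  finally show ?case .
qed


definition Dset :: "rat set \<Rightarrow> nat set" where
  "Dset R = {N. 0 < N \<and> 1 / of_nat N \<in> R}"

definition jN :: "nat \<Rightarrow> rat \<Rightarrow> int" where "jN N r = \<lfloor>of_nat N * r\<rfloor>"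

definition cd :: "nat \<Rightarrow> rat \<Rightarrow> bool" where "cd N r \<longleftrightarrow> of_int (jN N r) = of_nat N * r"

lemma cd_mult: assumes "cd N r" shows "cd (N*N') r \<and> jN (N*N') r = int N' * jN N r"
proof -
  have e: "of_nat (N*N') * r = (of_int (int N' * jN N r) :: rat)"
    using assms unfolding cd_def by (simp add: algebra_simps)
  then have "jN (N*N') r = int N' * jN N r" unfolding jN_def by (simp only: floor_of_int)
  then show ?thesis using e unfolding cd_def by (metis of_int_mult of_int_of_nat_eq)
qed

lemma cd_mult2: "cd N r \<Longrightarrow> cd (N'*N) r"
  using cd_mult by (metis mult.commute)

locale rg =
  fixes R :: "rat set"
  assumes sub: "is_subring_rat R" and ints: "range of_int \<subseteq> R"
    and den: "\<forall>r\<in>R. \<exists>N\<in>Dset R. cd N r"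
begin

lemma R_mult: "x \<in> R \<Longrightarrow> y \<in> R \<Longrightarrow> x * y \<in> R" using sub by (simp add: is_subring_rat_def)
lemma R_diff: "x \<in> R \<Longrightarrow> y \<in> R \<Longrightarrow> x - y \<in> R" using sub by (simp add: is_subring_rat_def)
lemma R_int: "of_int k \<in> R" using ints by auto
lemma R_0: "0 \<in> R" using R_int[of 0] by simp
lemma R_intmul: "x \<in> R \<Longrightarrow> of_int k * x \<in> R" using R_mult R_int by blast

lemma D_1: "1 \<in> Dset R" using R_int[of 1] by (simp add: Dset_def)
lemma D_mult: "N \<in> Dset R \<Longrightarrow> N' \<in> Dset R \<Longrightarrow> N * N' \<in> Dset R"
  unfolding Dset_def using R_mult by fastforce
lemma D_inv: "N \<in> Dset R \<Longrightarrow> 1 / of_nat N \<in> R" by (simp add: Dset_def)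
lemma D_pos: "N \<in> Dset R \<Longrightarrow> 0 < N" by (simp add: Dset_def)

lemma common_den: "finite X \<Longrightarrow> X \<subseteq> R \<Longrightarrow> \<exists>N\<in>Dset R. \<forall>r\<in>X. cd N r"
proof (induction X rule: finite_induct)
  case empty then show ?case using D_1 by blast
next
  case (insert x F)
  then obtain N where N: "N \<in> Dset R" "\<forall>r\<in>F. cd N r" by auto
  obtain N' where N': "N' \<in> Dset R" "cd N' x" using den insert by auto
  show ?case
    by (rule bexI[of _ "N*N'"]) (use N N' D_mult cd_mult cd_mult2 in auto)
qed

lemma term_collapse:
  assumes M: "is_subgrp M" and r: "r \<in> R" and m: "m \<in> M" and cdN: "cd N r" and N: "N \<in> Dset R"
  shows "teq R M (\<lambda>y. c * delta (r,m) y) (delta (1 / of_nat N, zsm (c * jN N r) m))"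
proof -
  let ?j = "jN N r"
  have Npos: "0 < N" using N D_pos by blast
  have rr: "of_int ?j * (1 / of_nat N) = r" using cdN Npos unfolding cd_def by (simp add: field_simps)
  have iN: "1 / of_nat N \<in> R" using N D_inv by blast
  have "teq R M (\<lambda>x. ?j * delta (1 / of_nat N, m) x) (delta (r, m))"
    using L6[OF iN m R_intmul[OF iN], of ?j] unfolding rr .
  then have a: "teq R M (delta (r, m)) (delta (1 / of_nat N, zsm ?j m))"
    using L5[OF iN m M, of ?j] teq_sym teq_trans by blast
  have zj: "zsm ?j m \<in> M" using M m subgrp_zsm by blast
  have "teq R M (\<lambda>y. c * delta (r,m) y) (\<lambda>y. c * delta (1 / of_nat N, zsm ?j m) y)"
    using teq_smul[OF a] .
  also have "teq R M \<dots> (delta (1 / of_nat N, zsm c (zsm ?j m)))"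
    using L5[OF iN zj M] .
  finally show ?thesis by (simp add: zsm_mult)
qed

lemma collapse:
  assumes M: "is_subgrp M" and N: "N \<in> Dset R"
  shows "finite X \<Longrightarrow> X \<subseteq> R \<times> M \<Longrightarrow> \<forall>x\<in>X. cd N (fst x) \<Longrightarrow>
    teq R M (\<lambda>y. \<Sum>x\<in>X. c x * delta x y) (delta (1 / of_nat N, \<Sum>x\<in>X. zsm (c x * jN N (fst x)) (snd x)))"
proof (induction X rule: finite_induct)
  case empty
  have "1 / of_nat N \<in> R" using N D_inv by blast
  then show ?case using teq_sym[OF L3[OF _ M]] by simp
next
  case (insert p F)
  obtain r m where p: "p = (r,m)" by fastforce
  have r: "r \<in> R" and m: "m \<in> M" using insert p by auto
  have iN: "1 / of_nat N \<in> R" using N D_inv by blast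
  let ?a = "zsm (c p * jN N r) m"
  let ?b = "\<Sum>x\<in>F. zsm (c x * jN N (fst x)) (snd x)"
  have a: "?a \<in> M" using M m subgrp_zsm by blast
  have b: "?b \<in> M"
  proof (rule subgrp_sum[OF M])
    fix x assume "x \<in> F" then have "snd x \<in> M" using insert by auto
    then show "zsm (c x * jN N (fst x)) (snd x) \<in> M" using M subgrp_zsm by blast
  qed
  have "teq R M (\<lambda>y. \<Sum>x\<in>insert p F. c x * delta x y) (\<lambda>y. c p * delta (r,m) y + (\<Sum>x\<in>F. c x * delta x y))"
    by (rule teq_eq) (use insert p in simp)
  also have "teq R M \<dots> (\<lambda>y. delta (1 / of_nat N, ?a) y + delta (1 / of_nat N, ?b) y)"
    by (rule teq_add) (use term_collapse[OF M r m _ N] insert p in auto)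
  also have "teq R M \<dots> (delta (1 / of_nat N, ?a + ?b))"
    using teq_sym[OF L1[OF iN a b]] .
  finally show ?case using insert p by simp
qed

end

definition supp :: "('b \<Rightarrow> int) \<Rightarrow> 'b set" where "supp f = {x. f x \<noteq> 0}"

lemma expand: "finite (supp h) \<Longrightarrow> h = (\<lambda>y. \<Sum>x\<in>supp h. h x * delta x y)"
proof
  fix y assume f: "finite (supp h)"
  have "(\<Sum>x\<in>supp h. h x * delta x y) = (\<Sum>x\<in>supp h. if x = y then h x else 0)"
    by (rule sum.cong) (auto simp: delta_def)
  also have "\<dots> = h y" using f by (simp add: sum.delta' supp_def)
  finally show "h y = (\<Sum>x\<in>supp h. h x * delta x y)" by simp
qed


definition Psi :: "nat \<Rightarrow> (rat \<times> 'a::ab_group_add) set \<Rightarrow> ((rat \<times> 'a) \<Rightarrow> int) \<Rightarrow> 'a" where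
  "Psi N Y f = (\<Sum>x\<in>Y. zsm (f x * jN N (fst x)) (snd x))"

lemma Psi_super: "finite Y \<Longrightarrow> supp f \<subseteq> Y \<Longrightarrow> Psi N Y f = Psi N (supp f) f"
  unfolding Psi_def by (rule sum.mono_neutral_right) (auto simp: supp_def)

lemma Psi_diff: "Psi N Y (\<lambda>x. f x - g x) = Psi N Y f - Psi N Y g"
  unfolding Psi_def by (simp add: left_diff_distrib zsm_diff_k sum_subtractf)

lemma Psi_scale: "\<forall>x\<in>Y. cd N (fst x) \<Longrightarrow> Psi (N*N') Y f = zsm (int N') (Psi N Y f)"
  unfolding Psi_def zsm_sum
proof (rule sum.cong[OF refl])
  fix x assume "\<forall>x\<in>Y. cd N (fst x)" "x \<in> Y"
  then have "jN (N*N') (fst x) = int N' * jN N (fst x)" using cd_mult by blast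
  then show "zsm (f x * jN (N * N') (fst x)) (snd x) = zsm (int N') (zsm (f x * jN N (fst x)) (snd x))"
    by (simp add: zsm_mult[symmetric] ac_simps)
qed

lemma Psi_delta: "finite Y \<Longrightarrow> p \<in> Y \<Longrightarrow> Psi K Y (delta p) = zsm (jN K (fst p)) (snd p)"
proof -
  assume Y: "finite Y" "p \<in> Y"
  have "Psi K Y (delta p) = (\<Sum>x\<in>Y. if x = p then zsm (jN K (fst p)) (snd p) else 0)"
    unfolding Psi_def by (rule sum.cong) (auto simp: delta_def)
  also have "\<dots> = zsm (jN K (fst p)) (snd p)" using Y by simp
  finally show ?thesis .
qed

lemma jN_add: "cd K r \<Longrightarrow> cd K r' \<Longrightarrow> jN K (r + r') = jN K r + jN K r'"
  unfolding cd_def jN_def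
  by (metis distrib_left floor_of_int of_int_add)

context rg begin

definition Tset :: "'a::ab_group_add set" where "Tset = {a. \<exists>M\<in>Dset R. zsm (int M) a = 0}"

lemma T_0: "0 \<in> Tset" unfolding Tset_def using D_1 by auto
lemma T_diff: "a \<in> Tset \<Longrightarrow> b \<in> Tset \<Longrightarrow> a - b \<in> Tset"
proof -
  assume "a \<in> Tset" "b \<in> Tset"
  then obtain M M' where M: "M \<in> Dset R" "zsm (int M) a = 0" "M' \<in> Dset R" "zsm (int M') b = 0"
    unfolding Tset_def by auto
  have "zsm (int (M*M')) (a - b) = zsm (int M') (zsm (int M) a) - zsm (int M) (zsm (int M') b)"
    by (simp add: zsm_diff zsm_mult[symmetric] mult.commute)
  then have "zsm (int (M*M')) (a - b) = 0" using M by simp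
  then show ?thesis unfolding Tset_def using D_mult M by blast
qed
lemma T_zsm: "K \<in> Dset R \<Longrightarrow> zsm (int K) a \<in> Tset \<Longrightarrow> a \<in> Tset"
proof -
  assume K: "K \<in> Dset R" "zsm (int K) a \<in> Tset"
  then obtain M where M: "M \<in> Dset R" "zsm (int M) (zsm (int K) a) = 0" unfolding Tset_def by auto
  then have "zsm (int (M*K)) a = 0" by (simp add: zsm_mult)
  then show ?thesis unfolding Tset_def using D_mult M K by blast
qed

lemma cd_R: "N \<in> Dset R \<Longrightarrow> cd N r \<Longrightarrow> r \<in> R"
proof -
  assume N: "N \<in> Dset R" "cd N r"
  then have "r = of_int (jN N r) * (1 / of_nat N)" using D_pos[OF N(1)] unfolding cd_def by (simp add: field_simps)
  then show ?thesis using R_intmul D_inv N by metis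
qed

definition good :: "((rat \<times> 'a::ab_group_add) \<Rightarrow> int) \<Rightarrow> bool" where
  "good f \<longleftrightarrow> (\<forall>N\<in>Dset R. \<forall>Y. finite Y \<and> supp f \<subseteq> Y \<and> (\<forall>x\<in>Y. cd N (fst x)) \<longrightarrow> Psi N Y f \<in> (Tset::'a set))"

lemma goodD: "good f \<Longrightarrow> N \<in> Dset R \<Longrightarrow> finite Y \<Longrightarrow> supp f \<subseteq> Y \<Longrightarrow> \<forall>x\<in>Y. cd N (fst x) \<Longrightarrow> Psi N Y f \<in> Tset"
  unfolding good_def by blast

lemma good_intro:
  assumes "\<And>N Y. N \<in> Dset R \<Longrightarrow> finite Y \<Longrightarrow> supp f \<subseteq> Y \<Longrightarrow> \<forall>x\<in>Y. cd N (fst x) \<Longrightarrow>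
     \<exists>N'\<in>Dset R. \<exists>Y'. finite Y' \<and> Y \<subseteq> Y' \<and> (\<forall>x\<in>Y'. cd (N*N') (fst x)) \<and> Psi (N*N') Y' f \<in> Tset"
  shows "good (f :: (rat \<times> 'a::ab_group_add) \<Rightarrow> int)"
  unfolding good_def
proof (intro ballI allI impI)
  fix N Y assume N: "N \<in> Dset R" and Y: "finite Y \<and> supp f \<subseteq> Y \<and> (\<forall>x\<in>Y. cd N (fst x))"
  have Y1: "finite Y" and Y2: "supp f \<subseteq> Y" and Y3: "\<forall>x\<in>Y. cd N (fst x)" using Y by auto
  obtain N' Y' where N': "N' \<in> Dset R" "finite Y'" "Y \<subseteq> Y'" "Psi (N*N') Y' f \<in> Tset"
    using assms[OF N Y1 Y2 Y3] by blast
  have "Psi (N*N') Y' f = Psi (N*N') (supp f) f" using Psi_super[OF N'(2)] Y2 N'(3) by blast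
  also have "\<dots> = Psi (N*N') Y f" using Psi_super[OF Y1 Y2] by simp
  also have "\<dots> = zsm (int N') (Psi N Y f)" using Psi_scale[OF Y3] by blast
  finally have "zsm (int N') (Psi N Y f) \<in> Tset" using N'(4) by simp
  then show "Psi N Y f \<in> Tset" using T_zsm[OF N'(1)] by blast
qed

definition Hset :: "((rat \<times> 'a::ab_group_add) \<Rightarrow> int) set" where
  "Hset = {f. finite (supp f) \<and> supp f \<subseteq> R \<times> UNIV \<and> good f}"

lemma den_set: assumes "finite X" "X \<subseteq> R \<times> UNIV" shows "\<exists>N\<in>Dset R. \<forall>x\<in>X. cd N (fst x)"
proof -
  have "fst ` X \<subseteq> R" using assms by auto
  from common_den[OF finite_imageI[OF assms(1)] this] show ?thesis by auto
qed

lemma H_zsub: "is_zsub (Hset :: ((rat \<times> 'a::ab_group_add) \<Rightarrow> int) set)"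
  unfolding is_zsub_def
proof (intro conjI ballI)
  show "(\<lambda>_. 0) \<in> (Hset :: ((rat \<times> 'a) \<Rightarrow> int) set)"
    unfolding Hset_def good_def Psi_def supp_def using T_0 by auto
next
  fix f g :: "(rat \<times> 'a) \<Rightarrow> int" assume f: "f \<in> Hset" and g: "g \<in> Hset"
  have sd: "supp (\<lambda>x. f x - g x) \<subseteq> supp f \<union> supp g" unfolding supp_def by auto
  have "good (\<lambda>x. f x - g x)"
  proof (rule good_intro)
    fix N Y assume N: "N \<in> Dset R" "finite Y" "supp (\<lambda>x. f x - g x) \<subseteq> Y" "\<forall>x\<in>Y. cd N (fst x)"
    obtain N' where N': "N' \<in> Dset R" "\<forall>x\<in>supp f \<union> supp g. cd N' (fst x)"
      using den_set[of "supp f \<union> supp g"] f g unfolding Hset_def by auto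
    let ?Y = "Y \<union> supp f \<union> supp g"
    have fin: "finite ?Y" using N f g unfolding Hset_def by auto
    have cdY: "\<forall>x\<in>?Y. cd (N*N') (fst x)" using N N' cd_mult cd_mult2 by blast
    have NN: "N*N' \<in> Dset R" using N N' D_mult by blast
    have gf: "good f" and gg: "good g" using f g unfolding Hset_def by auto
    have "Psi (N*N') ?Y f \<in> Tset" using goodD[OF gf NN fin _ cdY] by blast
    moreover have "Psi (N*N') ?Y g \<in> Tset" using goodD[OF gg NN fin _ cdY] by blast
    ultimately have "Psi (N*N') ?Y (\<lambda>x. f x - g x) \<in> Tset" by (simp add: Psi_diff T_diff)
    then show "\<exists>N'\<in>Dset R. \<exists>Y'. finite Y' \<and> Y \<subseteq> Y' \<and> (\<forall>x\<in>Y'. cd (N * N') (fst x)) \<and>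
             Psi (N * N') Y' (\<lambda>x. f x - g x) \<in> Tset"
      using N'(1) fin cdY by (intro bexI[of _ N'] exI[of _ ?Y]) auto
  qed
  moreover have "finite (supp (\<lambda>x. f x - g x))"
  proof (rule finite_subset[OF sd])
    show "finite (supp f \<union> supp g)" using f g unfolding Hset_def by simp
  qed
  moreover have "supp (\<lambda>x. f x - g x) \<subseteq> R \<times> UNIV"
  proof (rule subset_trans[OF sd])
    show "supp f \<union> supp g \<subseteq> R \<times> UNIV" using f g unfolding Hset_def by simp
  qed
  ultimately show "(\<lambda>x. f x - g x) \<in> Hset" unfolding Hset_def by simp
qed

lemma tgen_good:
  assumes fP: "fst ` P \<subseteq> R" and P: "finite P" and sP: "supp g \<subseteq> P"
    and zero: "\<And>K. (\<forall>x\<in>P. cd K (fst x)) \<Longrightarrow> Psi K P g = 0"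
  shows "good (g :: (rat \<times> 'a::ab_group_add) \<Rightarrow> int)"
proof (rule good_intro)
  fix N Y assume N: "N \<in> Dset R" "finite Y" "supp g \<subseteq> Y" "\<forall>x\<in>Y. cd N (fst x)"
  obtain N' where N': "N' \<in> Dset R" "\<forall>x\<in>P. cd N' (fst x)"
    using common_den[of "fst ` P"] fP P by auto
  let ?Y = "Y \<union> P"
  have fin: "finite ?Y" using N P by auto
  have cdY: "\<forall>x\<in>?Y. cd (N*N') (fst x)" using N N' cd_mult cd_mult2 by blast
  have sP': "supp g \<subseteq> ?Y" using sP by auto
  have "Psi (N*N') ?Y g = Psi (N*N') P g" using Psi_super[OF fin sP'] Psi_super[OF P sP] by simp
  also have "\<dots> = 0" using zero cdY by blast
  finally have "Psi (N*N') ?Y g \<in> Tset" using T_0 by simp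
  then show "\<exists>N'\<in>Dset R. \<exists>Y'. finite Y' \<and> Y \<subseteq> Y' \<and> (\<forall>x\<in>Y'. cd (N * N') (fst x)) \<and>
             Psi (N * N') Y' g \<in> Tset"
    using N'(1) fin cdY by blast
qed

lemma supp3: "supp (\<lambda>x. delta p1 x - delta p2 x - delta p3 x) \<subseteq> {p1,p2,p3}"
  unfolding supp_def delta_def by auto

lemma Psi3: "finite Y \<Longrightarrow> {p1,p2,p3} \<subseteq> Y \<Longrightarrow> Psi K Y (\<lambda>x. delta p1 x - delta p2 x - delta p3 x)
   = zsm (jN K (fst p1)) (snd p1) - zsm (jN K (fst p2)) (snd p2) - zsm (jN K (fst p3)) (snd p3)"
  using Psi_diff[of K Y "\<lambda>x. delta p1 x - delta p2 x" "delta p3"] Psi_diff[of K Y "delta p1" "delta p2"]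
    Psi_delta[of Y] by auto

lemma tgens_H: "tgens R (UNIV :: 'a::ab_group_add set) \<subseteq> Hset"
proof
  fix g :: "(rat \<times> 'a) \<Rightarrow> int" assume "g \<in> tgens R UNIV"
  then consider (a) r r' m where "r \<in> R" "r' \<in> R" "g = (\<lambda>x. delta (r + r', m) x - delta (r, m) x - delta (r', m) x)"
    | (b) r m m' where "r \<in> R" "g = (\<lambda>x. delta (r, m + m') x - delta (r, m) x - delta (r, m') x)"
    unfolding tgens_def by blast
  then show "g \<in> Hset"
  proof cases
    case a
    let ?P = "{(r + r', m), (r, m), (r', m)}"
    have "r - (0 - r') \<in> R" using a R_diff R_0 by blast
    then have fP: "fst ` ?P \<subseteq> R" using a by auto
    have sP: "supp g \<subseteq> ?P" unfolding a(3) by (rule supp3)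
    have "good g"
    proof (rule tgen_good[OF fP _ sP])
      fix K assume "\<forall>x\<in>?P. cd K (fst x)"
      then have "cd K r" "cd K r'" by auto
      then have "jN K (r + r') = jN K r + jN K r'" by (rule jN_add)
      moreover have "Psi K ?P g = zsm (jN K (r+r')) m - zsm (jN K r) m - zsm (jN K r') m"
        unfolding a(3) using Psi3[of ?P "(r+r',m)" "(r,m)" "(r',m)" K] by simp
      ultimately show "Psi K ?P g = 0" by (simp add: zsm_add)
    qed simp
    moreover have "finite (supp g)" using sP by (rule finite_subset) simp
    moreover have "supp g \<subseteq> R \<times> UNIV" using sP fP by force
    ultimately show ?thesis unfolding Hset_def by simp
  next
    case b
    let ?P = "{(r, m + m'), (r, m), (r, m')}"
    have fP: "fst ` ?P \<subseteq> R" using b by auto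
    have sP: "supp g \<subseteq> ?P" unfolding b(2) by (rule supp3)
    have "good g"
    proof (rule tgen_good[OF fP _ sP])
      fix K assume "\<forall>x\<in>?P. cd K (fst x)"
      have "Psi K ?P g = zsm (jN K r) (m+m') - zsm (jN K r) m - zsm (jN K r) m'"
        unfolding b(2) using Psi3[of ?P "(r,m+m')" "(r,m)" "(r,m')" K] by simp
      then show "Psi K ?P g = 0" by (simp add: zsm_distrib)
    qed simp
    moreover have "finite (supp g)" using sP by (rule finite_subset) simp
    moreover have "supp g \<subseteq> R \<times> UNIV" using sP fP by force
    ultimately show ?thesis unfolding Hset_def by simp
  qed
qed

lemma trel_H: "trel R (UNIV :: 'a::ab_group_add set) \<subseteq> Hset"
  unfolding trel_def using H_zsub tgens_H by blast

end

lemma cd_intro: "of_nat N * r = of_int k \<Longrightarrow> cd N r"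
  unfolding cd_def jN_def by simp

lemma Zinv_sub: "is_subring_rat (Z_inv I)"
  unfolding is_subring_rat_def Z_inv_def by auto
lemma Zinv_ints: "range of_int \<subseteq> Z_inv I"
  unfolding Z_inv_def by auto
lemma Zinv_inv: "n \<in> I \<Longrightarrow> 1 / of_nat n \<in> Z_inv I"
  unfolding Z_inv_def by auto

lemma Zinv_rg: "rg (Z_inv I)"
proof -
  let ?R = "Z_inv I"
  let ?S = "{r. \<exists>N\<in>Dset ?R. cd N r}"
  have sr: "is_subring_rat ?R" by (rule Zinv_sub)
  have R_mult: "x \<in> ?R \<Longrightarrow> y \<in> ?R \<Longrightarrow> x * y \<in> ?R" for x y using sr by (simp add: is_subring_rat_def)
  have D1: "1 \<in> Dset ?R" using Zinv_ints by (force simp: Dset_def)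
  have Dm: "N \<in> Dset ?R \<Longrightarrow> N' \<in> Dset ?R \<Longrightarrow> N * N' \<in> Dset ?R" for N N'
    unfolding Dset_def using R_mult by fastforce
  have "is_subring_rat ?S"
    unfolding is_subring_rat_def
  proof (intro conjI ballI)
    show "1 \<in> ?S" using D1 cd_intro[of 1 1 1] by auto
  next
    fix x y assume x: "x \<in> ?S" and y: "y \<in> ?S"
    then obtain N N' where N: "N \<in> Dset ?R" "cd N x" "N' \<in> Dset ?R" "cd N' y" by auto
    have NN: "N*N' \<in> Dset ?R" using Dm N by blast
    have cx: "cd (N*N') x" and cy: "cd (N*N') y" using N cd_mult cd_mult2 by blast+
    have "of_nat (N*N') * (x - y) = of_int (jN (N*N') x - jN (N*N') y)"
      using cx cy unfolding cd_def by (simp add: algebra_simps)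
    then show "x - y \<in> ?S" using NN cd_intro by blast
    have "of_nat (N*N') * (x * y) = of_int (jN N x * jN N' y)"
      using N unfolding cd_def by (simp add: algebra_simps)
    then show "x * y \<in> ?S" using NN cd_intro by blast
  qed
  moreover have "range of_int \<subseteq> ?S"
    using D1 cd_intro[of 1] by force
  moreover have "(\<lambda>n. 1 / of_nat n) ` I \<subseteq> ?S"
  proof
    fix q :: rat assume "q \<in> (\<lambda>n. 1 / of_nat n) ` I"
    then obtain n where n: "n \<in> I" "q = 1 / of_nat n" by auto
    show "q \<in> ?S"
    proof (cases "n = 0")
      case True then show ?thesis using n D1 cd_intro[of 1 0 0] by auto
    next
      case False
      then have "n \<in> Dset ?R" using Zinv_inv[OF n(1)] by (simp add: Dset_def)
      moreover have "cd n q" using False n by (intro cd_intro[of n q 1]) simp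
      ultimately show ?thesis by blast
    qed
  qed
  ultimately have "?R \<subseteq> ?S" unfolding Z_inv_def by blast
  then show ?thesis unfolding rg_def using sr Zinv_ints by blast
qed

lemma lagrange:
  fixes A C :: "'a::ab_group_add set"
  assumes A: "is_subgrp A" and C: "is_subgrp C" and CA: "C \<subseteq> A"
    and fin: "finite (cosets_in A C)" and a: "a \<in> A"
  shows "zsm (int (card (cosets_in A C))) a \<in> C"
proof -
  let ?Q = "cosets_in A C"
  define rep where "rep K = (SOME x. x \<in> K)" for K :: "'a set"
  define tau where "tau K = (\<lambda>x. a + x) ` K" for K :: "'a set"
  have Qform: "K \<in> ?Q \<Longrightarrow> \<exists>b\<in>A. K = (\<lambda>c. b + c) ` C" for K unfolding cosets_in_def by auto
  have rep: "rep ((\<lambda>c. b + c) ` C) - b \<in> C" for b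
  proof -
    have "(\<lambda>c. b + c) ` C \<noteq> {}" using C subgrp_0 by blast
    then have "rep ((\<lambda>c. b + c) ` C) \<in> (\<lambda>c. b + c) ` C" unfolding rep_def by (meson ex_in_conv someI_ex)
    then show ?thesis by auto
  qed
  have tauf: "tau ((\<lambda>c. b + c) ` C) = (\<lambda>c. (a + b) + c) ` C" for b
    unfolding tau_def by (auto simp: image_image add.assoc)
  have tauQ: "tau ` ?Q \<subseteq> ?Q"
  proof
    fix K' assume "K' \<in> tau ` ?Q"
    then obtain K where K: "K \<in> ?Q" "K' = tau K" by auto
    then obtain b where b: "b \<in> A" "K = (\<lambda>c. b + c) ` C" using Qform by blast
    then have "K' = (\<lambda>c. (a + b) + c) ` C" using K tauf by simp
    moreover have "a + b \<in> A" using subgrp_add[OF A a b(1)] .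
    ultimately show "K' \<in> ?Q" unfolding cosets_in_def by blast
  qed
  have inj: "inj_on tau ?Q"
  proof
    fix K K' assume "tau K = tau K'"
    then show "K = K'" unfolding tau_def by (simp add: inj_image_eq_iff inj_def)
  qed
  have img: "tau ` ?Q = ?Q" using endo_inj_surj[OF fin tauQ inj] .
  have s1: "sum rep ?Q = sum (rep \<circ> tau) ?Q" using sum.reindex[OF inj, of rep] img by simp
  have diffC: "rep (tau K) - a - rep K \<in> C" if KQ: "K \<in> ?Q" for K
  proof -
    obtain b where "b \<in> A" "K = (\<lambda>c. b + c) ` C" using Qform[OF KQ] by blast
    then have "rep (tau K) - (a + b) \<in> C" "rep K - b \<in> C" using rep tauf by auto
    then have "(rep (tau K) - (a + b)) - (rep K - b) \<in> C" using C subgrp_diff by blast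
    moreover have "(rep (tau K) - (a + b)) - (rep K - b) = rep (tau K) - a - rep K"
      by (simp add: algebra_simps)
    ultimately show ?thesis by simp
  qed
  have "(\<Sum>K\<in>?Q. rep (tau K) - a - rep K) \<in> C" by (rule subgrp_sum[OF C], rule diffC)
  moreover have "(\<Sum>K\<in>?Q. rep (tau K) - a - rep K) = - (\<Sum>K\<in>?Q. a)"
  proof -
    have "(\<Sum>K\<in>?Q. rep (tau K) - a - rep K) = (\<Sum>K\<in>?Q. rep (tau K)) - (\<Sum>K\<in>?Q. a) - (\<Sum>K\<in>?Q. rep K)"
      by (simp only: sum_subtractf)
    moreover have "(\<Sum>K\<in>?Q. rep (tau K)) = (\<Sum>K\<in>?Q. rep K)" using s1 by simp
    ultimately show ?thesis by simp
  qed
  ultimately have "- (\<Sum>K\<in>?Q. a) \<in> C" by simp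
  then have "(\<Sum>K\<in>?Q. a) \<in> C" using subgrp_neg[OF C] by fastforce
  then show ?thesis using sum_const_zsm[OF fin, of a] by simp
qed

lemma tcls_self: "f \<in> free_ab R M \<Longrightarrow> f \<in> tcls R M f"
  unfolding tcls_def using trel_0 by simp

lemma tcls_eq: "teq R M f g \<Longrightarrow> tcls R M f = tcls R M g"
  unfolding tcls_def
proof (intro Collect_cong conj_cong refl iffI)
  fix h assume t: "teq R M f g" and "(\<lambda>x. h x - f x) \<in> trel R M"
  then show "(\<lambda>x. h x - g x) \<in> trel R M" using teq_trans[of R M h f g] unfolding teq_def by simp
next
  fix h assume t: "teq R M f g" and "(\<lambda>x. h x - g x) \<in> trel R M"
  then show "(\<lambda>x. h x - f x) \<in> trel R M" using teq_trans[of R M h g f] teq_sym[OF t] unfolding teq_def by simp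
qed

lemma tcls_mem: "h \<in> tcls R M f \<Longrightarrow> teq R M h f"
  unfolding tcls_def teq_def by simp

lemma trel_mono: "trel R A \<subseteq> trel R (UNIV :: 'a::ab_group_add set)"
proof -
  have "tgens R A \<subseteq> tgens R (UNIV :: 'a set)" unfolding tgens_def by blast
  then show ?thesis using trel_zsub[of R "UNIV :: 'a set"] tgens_trel[of R "UNIV :: 'a set"]
    unfolding trel_def[of R A] by blast
qed

lemma teq_mono: "teq R A f g \<Longrightarrow> teq R (UNIV :: 'a::ab_group_add set) f g"
  unfolding teq_def using trel_mono by blast

lemma free_mono: "free_ab R A \<subseteq> free_ab R UNIV" unfolding free_ab_def by auto

lemma free_supp: "f \<in> free_ab R M \<longleftrightarrow> finite (supp f) \<and> supp f \<subseteq> R \<times> M"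
  unfolding free_ab_def supp_def by simp

lemma tmap: assumes f: "f \<in> free_ab R A"
  shows "tensor_map R UNIV (tcls R A f) = tcls R (UNIV :: 'a::ab_group_add set) f"
proof -
  let ?g = "SOME g. g \<in> tcls R A f"
  have "?g \<in> tcls R A f" using tcls_self[OF f] by (rule someI[where P="\<lambda>g. g \<in> tcls R A f"])
  then have "teq R A ?g f" by (rule tcls_mem)
  then have "teq R UNIV ?g f" by (rule teq_mono)
  then show ?thesis unfolding tensor_map_def by (rule tcls_eq)
qed

context rg begin

lemma C2: assumes M: "is_subgrp M" and N: "N \<in> Dset R" and K: "K \<in> Dset R" and b: "b \<in> M"
  shows "teq R M (delta (1 / of_nat N, b)) (delta (1 / of_nat (N*K), zsm (int K) b))"
proof -
  have NK: "N*K \<in> Dset R" using D_mult N K by blast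
  have iNK: "1 / of_nat (N*K) \<in> R" using D_inv NK by blast
  have e: "of_int (int K) * (1 / of_nat (N*K)) = (1 / of_nat N :: rat)"
    using D_pos[OF K] by (simp add: field_simps)
  have "teq R M (\<lambda>x. int K * delta (1 / of_nat (N*K), b) x) (delta (1 / of_nat N, b))"
    using L6[OF iNK b R_intmul[OF iNK], of "int K"] unfolding e .
  then show ?thesis using L5[OF iNK b M, of "int K"] teq_sym teq_trans by blast
qed

lemma collapse_supp:
  assumes M: "is_subgrp M" and h: "h \<in> free_ab R M" and N: "N \<in> Dset R" and cdN: "\<forall>x\<in>supp h. cd N (fst x)"
  shows "teq R M h (delta (1 / of_nat N, Psi N (supp h) h))" and "Psi N (supp h) h \<in> M"
proof -
  have fs: "finite (supp h)" "supp h \<subseteq> R \<times> M" using h free_supp by auto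
  show "teq R M h (delta (1 / of_nat N, Psi N (supp h) h))"
    using collapse[OF M N fs cdN, of h] expand[OF fs(1)] unfolding Psi_def by simp
  show "Psi N (supp h) h \<in> M" unfolding Psi_def
  proof (rule subgrp_sum[OF M])
    fix x assume "x \<in> supp h"
    then have "snd x \<in> M" using fs by auto
    then show "zsm (h x * jN N (fst x)) (snd x) \<in> M" using subgrp_zsm[OF M] by blast
  qed
qed

lemma key_inj:
  assumes A: "is_subgrp A" and h: "h \<in> free_ab R A" and ht: "h \<in> trel R (UNIV :: 'a::ab_group_add set)"
  shows "h \<in> trel R A"
proof -
  have fs: "finite (supp h)" "supp h \<subseteq> R \<times> A" using h free_supp by auto
  obtain N where N: "N \<in> Dset R" "\<forall>x\<in>supp h. cd N (fst x)" using den_set[OF fs(1)] fs(2) by blast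
  let ?b = "Psi N (supp h) h"
  have "h \<in> Hset" using trel_H ht by blast
  then have "?b \<in> Tset" unfolding Hset_def good_def using N fs by blast
  then obtain K where K: "K \<in> Dset R" "zsm (int K) ?b = 0" unfolding Tset_def by blast
  have b: "?b \<in> A" using collapse_supp(2)[OF A h N] .
  have "teq R A h (delta (1 / of_nat N, ?b))" using collapse_supp(1)[OF A h N] .
  also have "teq R A \<dots> (delta (1 / of_nat (N*K), 0))" using C2[OF A N(1) K(1) b] K(2) by simp
  also have "teq R A \<dots> (\<lambda>_. 0)" using L3[OF D_inv[OF D_mult[OF N(1) K(1)]] A] .
  finally show ?thesis by (simp add: teq_zero_iff)
qed

lemma key_surj:
  assumes A: "is_subgrp A" and h: "h \<in> free_ab R (UNIV :: 'a::ab_group_add set)"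
    and tors: "\<forall>x. \<exists>K\<in>Dset R. zsm (int K) x \<in> A"
  shows "\<exists>f\<in>free_ab R A. teq R UNIV h f"
proof -
  have fs: "finite (supp h)" "supp h \<subseteq> R \<times> UNIV" using h free_supp by auto
  obtain N where N: "N \<in> Dset R" "\<forall>x\<in>supp h. cd N (fst x)" using den_set[OF fs] by blast
  let ?b = "Psi N (supp h) h"
  obtain K where K: "K \<in> Dset R" "zsm (int K) ?b \<in> A" using tors by blast
  have "teq R UNIV h (delta (1 / of_nat N, ?b))" using collapse_supp(1)[OF subgrp_UNIV h N] .
  also have "teq R UNIV \<dots> (delta (1 / of_nat (N*K), zsm (int K) ?b))" using C2[OF subgrp_UNIV N(1) K(1)] by simp
  finally have t: "teq R UNIV h (delta (1 / of_nat (N*K), zsm (int K) ?b))" .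
  have "delta (1 / of_nat (N*K), zsm (int K) ?b) \<in> free_ab R A"
  proof -
    define p where "p = (1 / of_nat (N*K) :: rat, zsm (int K) ?b)"
    have e: "supp (delta p) = {p}" by (auto simp: supp_def delta_def)
    have "fst p \<in> R" unfolding p_def using D_inv[OF D_mult[OF N(1) K(1)]] by simp
    moreover have "snd p \<in> A" unfolding p_def using K(2) by simp
    ultimately have "delta p \<in> free_ab R A" unfolding free_supp e by (cases p) auto
    then show ?thesis unfolding p_def .
  qed
  then show ?thesis using t by blast
qed

end


lemma free_diff: "f \<in> free_ab R M \<Longrightarrow> g \<in> free_ab R M \<Longrightarrow> (\<lambda>x. f x - g x) \<in> free_ab R M"
proof -
  assume f: "f \<in> free_ab R M" and g: "g \<in> free_ab R M"
  have sd: "supp (\<lambda>x. f x - g x) \<subseteq> supp f \<union> supp g" unfolding supp_def by auto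
  have "finite (supp f \<union> supp g)" "supp f \<union> supp g \<subseteq> R \<times> M" using f g free_supp by auto
  then show ?thesis unfolding free_supp using sd finite_subset by blast
qed

theorem lemma3p21:
  fixes G :: "('g, 'm) monoid_scheme"
    and S :: "'g set"
    and A :: "'a::ab_group_add set"
    and \<sigma> :: "'g \<Rightarrow> 'a \<Rightarrow> 'a"
  assumes grp: "group G"
    and S_sub: "S \<subseteq> carrier G" and S_one: "\<one>\<^bsub>G\<^esub> \<in> S"
    and S_mult: "\<forall>s\<in>S. \<forall>t\<in>S. s \<otimes>\<^bsub>G\<^esub> t \<in> S"
    and S_gen: "generate G S = carrier G"
    and act_aut: "\<forall>g\<in>carrier G. bij (\<sigma> g) \<and> (\<forall>x y. \<sigma> g (x + y) = \<sigma> g x + \<sigma> g y)"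
    and act_one: "\<sigma> \<one>\<^bsub>G\<^esub> = id"
    and act_mult: "\<forall>g\<in>carrier G. \<forall>h\<in>carrier G. \<sigma> (g \<otimes>\<^bsub>G\<^esub> h) = \<sigma> g \<circ> \<sigma> h"
    and A_sub: "is_subgrp A"
    and A_inv: "\<forall>s\<in>S. \<sigma> s ` A \<subseteq> A"
    and faithful: "\<forall>s\<in>S. \<forall>t\<in>S. (\<forall>a\<in>A. \<sigma> s a = \<sigma> t a) \<longrightarrow> s = t"
    and non_aut: "\<forall>s\<in>S. \<sigma> s ` A = A \<longrightarrow> inv\<^bsub>G\<^esub> s \<in> S"
    and FI: "\<forall>s\<in>S. finite (cosets_in A (\<sigma> s ` A))"
    and JF: "\<forall>C\<in>constructible S \<sigma> A. \<forall>g\<in>carrier G. (\<forall>c\<in>C. \<sigma> g c = c) \<longrightarrow> g = \<one>\<^bsub>G\<^esub>"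
    and gen: "gen_subgrp (\<Union>g\<in>carrier G. \<sigma> g ` A) = UNIV"
  shows "bij_betw (tensor_map (Z_inv (index_in A ` constructible S \<sigma> A)) UNIV)
           (tensor (Z_inv (index_in A ` constructible S \<sigma> A)) A)
           (tensor (Z_inv (index_in A ` constructible S \<sigma> A)) UNIV)"
proof -
  let ?I = "index_in A ` constructible S \<sigma> A"
  let ?R = "Z_inv ?I"
  interpret rg ?R by (rule Zinv_rg)
  interpret G: group G by (rule grp)
  have add: "\<sigma> g (x + y) = \<sigma> g x + \<sigma> g y" if "g \<in> carrier G" for g x y using act_aut that by blast
  have zc: "\<sigma> g (zsm k x) = zsm k (\<sigma> g x)" if "g \<in> carrier G" for g k x
    using zsm_hom[of "\<sigma> g"] add[OF that] by blast
  have A_zsm: "x \<in> A \<Longrightarrow> zsm k x \<in> A" for k x using subgrp_zsm[OF A_sub] by blast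
  define W where "W = {x. \<exists>K\<in>Dset ?R. zsm (int K) x \<in> A}"
  have AW: "x \<in> A \<Longrightarrow> x \<in> W" for x unfolding W_def using D_1 by force
  have W_sub: "is_subgrp W"
    unfolding is_subgrp_def
  proof (intro conjI ballI)
    show "0 \<in> W" using AW subgrp_0[OF A_sub] by blast
  next
    fix x y assume "x \<in> W" "y \<in> W"
    then obtain K K' where K: "K \<in> Dset ?R" "zsm (int K) x \<in> A" "K' \<in> Dset ?R" "zsm (int K') y \<in> A"
      unfolding W_def by blast
    have "zsm (int (K*K')) (x - y) = zsm (int K') (zsm (int K) x) - zsm (int K) (zsm (int K') y)"
      by (simp add: zsm_diff zsm_mult[symmetric] mult.commute)
    moreover have "zsm (int K') (zsm (int K) x) - zsm (int K) (zsm (int K') y) \<in> A"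
      using subgrp_diff[OF A_sub A_zsm[OF K(2)] A_zsm[OF K(4)]] .
    ultimately have "zsm (int (K*K')) (x - y) \<in> A" by simp
    then show "x - y \<in> W" unfolding W_def using D_mult[OF K(1) K(3)] by blast
  qed
  have genP: "\<forall>a\<in>A. \<sigma> g a \<in> W" if "g \<in> generate G S" for g
    using that
  proof (induction rule: generate.induct)
    case one then show ?case using act_one AW by simp
  next
    case (incl s) then show ?case using A_inv AW by blast
  next
    case (inv s)
    have sG: "s \<in> carrier G" using inv S_sub by blast
    have isG: "inv\<^bsub>G\<^esub> s \<in> carrier G" using sG by simp
    let ?C = "\<sigma> s ` A"
    have s0: "\<sigma> s 0 = 0" using add[OF sG, of 0 0] by simp
    have sd: "\<sigma> s (a - b) = \<sigma> s a - \<sigma> s b" for a b using add[OF sG, of "a - b" b] by (simp add: algebra_simps)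
    have Csub: "is_subgrp ?C" unfolding is_subgrp_def
    proof (intro conjI ballI)
      show "0 \<in> ?C" using s0 subgrp_0[OF A_sub] by force
    next
      fix x y assume "x \<in> ?C" "y \<in> ?C"
      then obtain a b where ab: "a \<in> A" "b \<in> A" "x = \<sigma> s a" "y = \<sigma> s b" by blast
      then have "x - y = \<sigma> s (a - b)" using sd by simp
      moreover have "a - b \<in> A" using subgrp_diff[OF A_sub ab(1,2)] .
      ultimately show "x - y \<in> ?C" by blast
    qed
    have CA: "?C \<subseteq> A" using A_inv inv by blast
    have fin: "finite (cosets_in A ?C)" using FI inv by blast
    let ?n = "card (cosets_in A ?C)"
    have "?n = index_in A ?C" by (simp add: index_in_def)
    moreover have "?C \<in> constructible S \<sigma> A" using constructible.img[OF constructible.top inv] .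
    ultimately have nI: "?n \<in> ?I" by simp
    have "(\<lambda>c. 0 + c) ` ?C \<in> cosets_in A ?C" unfolding cosets_in_def using subgrp_0[OF A_sub] by blast
    then have "?n > 0" using fin card_gt_0_iff by blast
    then have nD: "?n \<in> Dset ?R" using Zinv_inv[OF nI] by (simp add: Dset_def)
    show ?case
    proof
      fix a assume a: "a \<in> A"
      have "zsm (int ?n) a \<in> ?C" using lagrange[OF A_sub Csub CA fin a] .
      then obtain b where b: "b \<in> A" "zsm (int ?n) a = \<sigma> s b" by blast
      have "\<sigma> (inv\<^bsub>G\<^esub> s \<otimes>\<^bsub>G\<^esub> s) = \<sigma> (inv\<^bsub>G\<^esub> s) \<circ> \<sigma> s" using act_mult isG sG by blast
      then have "\<sigma> (inv\<^bsub>G\<^esub> s) (\<sigma> s b) = \<sigma> (inv\<^bsub>G\<^esub> s \<otimes>\<^bsub>G\<^esub> s) b" by simp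
      also have "\<dots> = b" using G.l_inv[OF sG] act_one by simp
      finally have "zsm (int ?n) (\<sigma> (inv\<^bsub>G\<^esub> s) a) = b" using zc[OF isG] b(2) by metis
      then show "\<sigma> (inv\<^bsub>G\<^esub> s) a \<in> W" unfolding W_def using nD b(1) by blast
    qed
  next
    case (eng g h)
    have gG: "g \<in> carrier G" and hG: "h \<in> carrier G" using eng G.generate_in_carrier[OF S_sub] by blast+
    show ?case
    proof
      fix a assume a: "a \<in> A"
      obtain N where N: "N \<in> Dset ?R" "zsm (int N) (\<sigma> h a) \<in> A" using eng.IH(2) a unfolding W_def by blast
      obtain N' where N': "N' \<in> Dset ?R" "zsm (int N') (\<sigma> g (zsm (int N) (\<sigma> h a))) \<in> A"
        using eng.IH(1) N(2) unfolding W_def by blast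
      have "zsm (int (N'*N)) (\<sigma> (g \<otimes>\<^bsub>G\<^esub> h) a) = zsm (int N') (zsm (int N) (\<sigma> g (\<sigma> h a)))"
        using act_mult gG hG by (simp add: zsm_mult)
      also have "\<dots> = zsm (int N') (\<sigma> g (zsm (int N) (\<sigma> h a)))" using zc[OF gG] by simp
      finally have "zsm (int (N'*N)) (\<sigma> (g \<otimes>\<^bsub>G\<^esub> h) a) \<in> A" using N'(2) by simp
      then show "\<sigma> (g \<otimes>\<^bsub>G\<^esub> h) a \<in> W" unfolding W_def using D_mult[OF N'(1) N(1)] by blast
    qed
  qed
  have "(\<Union>g\<in>carrier G. \<sigma> g ` A) \<subseteq> W"
  proof
    fix y assume "y \<in> (\<Union>g\<in>carrier G. \<sigma> g ` A)"
    then obtain g a where "g \<in> carrier G" "a \<in> A" "y = \<sigma> g a" by blast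
    then show "y \<in> W" using genP S_gen by blast
  qed
  then have "W \<in> {H. is_subgrp H \<and> (\<Union>g\<in>carrier G. \<sigma> g ` A) \<subseteq> H}" using W_sub by blast
  then have "gen_subgrp (\<Union>g\<in>carrier G. \<sigma> g ` A) \<subseteq> W" unfolding gen_subgrp_def by (rule Inter_lower)
  then have tors: "\<forall>x. \<exists>K\<in>Dset ?R. zsm (int K) x \<in> A" using gen unfolding W_def by blast
  show ?thesis unfolding bij_betw_def
  proof
    show "inj_on (tensor_map ?R UNIV) (tensor ?R A)"
    proof
      fix X Y :: "((rat \<times> 'a) \<Rightarrow> int) set" assume X: "X \<in> tensor ?R A" and Y: "Y \<in> tensor ?R A"
        and eq: "tensor_map ?R UNIV X = tensor_map ?R UNIV Y"
      obtain f where f: "f \<in> free_ab ?R A" "X = tcls ?R A f" using X unfolding tensor_def by blast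
      obtain g where g: "g \<in> free_ab ?R A" "Y = tcls ?R A g" using Y unfolding tensor_def by blast
      have "tcls ?R UNIV f = tcls ?R UNIV g" using eq tmap f g by metis
      moreover have "f \<in> tcls ?R UNIV f" using tcls_self free_mono f(1) by blast
      ultimately have "teq ?R UNIV f g" using tcls_mem by metis
      then have "(\<lambda>x. f x - g x) \<in> trel ?R UNIV" unfolding teq_def .
      then have "(\<lambda>x. f x - g x) \<in> trel ?R A" using key_inj[OF A_sub free_diff[OF f(1) g(1)]] by blast
      then have "teq ?R A f g" unfolding teq_def .
      then show "X = Y" using f g tcls_eq by metis
    qed
  next
    show "tensor_map ?R UNIV ` tensor ?R A = tensor ?R UNIV"
    proof
      show "tensor_map ?R UNIV ` tensor ?R A \<subseteq> tensor ?R UNIV"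
      proof
        fix Z :: "((rat \<times> 'a) \<Rightarrow> int) set" assume "Z \<in> tensor_map ?R UNIV ` tensor ?R A"
        then obtain f where f: "f \<in> free_ab ?R A" "Z = tensor_map ?R UNIV (tcls ?R A f)" unfolding tensor_def by blast
        then have "Z = tcls ?R UNIV f" using tmap by metis
        then show "Z \<in> tensor ?R UNIV" using free_mono f(1) unfolding tensor_def by blast
      qed
    next
      show "tensor ?R UNIV \<subseteq> tensor_map ?R UNIV ` tensor ?R A"
      proof
        fix Z :: "((rat \<times> 'a) \<Rightarrow> int) set" assume "Z \<in> tensor ?R UNIV"
        then obtain h where h: "h \<in> free_ab ?R UNIV" "Z = tcls ?R UNIV h" unfolding tensor_def by blast
        obtain f where f: "f \<in> free_ab ?R A" "teq ?R UNIV h f" using key_surj[OF A_sub h(1) tors] by blast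
        have "Z = tcls ?R UNIV f" using h(2) tcls_eq[OF f(2)] by simp
        also have "\<dots> = tensor_map ?R UNIV (tcls ?R A f)" using tmap[OF f(1)] by simp
        finally show "Z \<in> tensor_map ?R UNIV ` tensor ?R A" using f(1) unfolding tensor_def by blast
      qed
    qed
  qed
qed

end
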